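(* Let $(H_n)_{n\ge1}$ be symmetric positive-definite random $d\times d$ matrices with $\|H_n\|_2\le1$ a.s., $\gamma_n=Cn^{-\alpha}$ with $C>0$, $\alpha\in(\frac12,1)$, and $X_0\in\mathbb R^{d\times k}$ with $X_0^\top X_0=I_k$. Let either $X_n=R_{X_{n-1}}\big(\gamma_n(I-X_{n-1}X_{n-1}^\top)H_nX_{n-1}\big)$ for all $n$ (Riemannian SGD), or $X_n=R_{X_{n-1}}(\gamma_nH_nX_{n-1})$ for all $n$ (randomized power method). In both cases there is a constant $c>0$ such that almost surely, for all $n\ge1$, $$\big\|X_n-X_{n-1}-\gamma_n(I-X_{n-1}X_{n-1}^\top)H_nX_{n-1}\big\|_F\le c\,\gamma_n^2,$$ i.e. both updates coincide with the Oja update $X_{n-1}+\gamma_n(I-X_{n-1}X_{n-1}^\top)H_nX_{n-1}$ up to $O(\gamma_n^2)$.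
   Context: $R_X(V)=(X+V)[(X+V)^\top(X+V)]^{-1/2}$ for $X\in\mathbb R^{d\times k}$ with $X^\top X=I_k$ and $V\in\mathbb R^{d\times k}$ (the projection-like retraction on the Grassmann manifold of $k$-dimensional subspaces of $\mathbb R^d$, represented by orthonormal $d\times k$ matrices). *)

theory Defs
  imports "HOL-Probability.Probability"
begin

text \<open>Matrices are Cartesian-product types: a d x k matrix is real^'k^'d.
  The norm of such a matrix (the L2 norm of its entries) is the Frobenius norm.\<close>

definition sym_mat :: "real^'n^'n \<Rightarrow> bool" where
  "sym_mat A \<longleftrightarrow> transpose A = A"

definition pos_def_mat :: "real^'n^'n \<Rightarrow> bool" where
  "pos_def_mat A \<longleftrightarrow> sym_mat A \<and> (\<forall>x. x \<noteq> 0 \<longrightarrow> x \<bullet> (A *v x) > 0)"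

definition spec_norm :: "real^'n^'m \<Rightarrow> real" where
  "spec_norm A = onorm (\<lambda>x. A *v x)"

definition frob_norm :: "real^'n^'m \<Rightarrow> real" where
  "frob_norm A = sqrt (\<Sum>i\<in>UNIV. \<Sum>j\<in>UNIV. (A $ i $ j)\<^sup>2)"

text \<open>Symmetric positive-definite square root (unique when A is positive definite).\<close>
definition mat_sqrt :: "real^'n^'n \<Rightarrow> real^'n^'n" where
  "mat_sqrt A = (THE B. pos_def_mat B \<and> B ** B = A)"

definition mat_inv_sqrt :: "real^'n^'n \<Rightarrow> real^'n^'n" where
  "mat_inv_sqrt A = matrix_inv (mat_sqrt A)"

definition retr :: "real^'k^'d \<Rightarrow> real^'k^'d \<Rightarrow> real^'k^'d" where
  "retr X V = (X + V) ** mat_inv_sqrt (transpose (X + V) ** (X + V))"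

end

theory Submission
  imports Defs
begin

lemma mm_add_r: "((A::real^'n^'m) + B) ** C = A ** C + B ** C"
  by (vector matrix_matrix_mult_def sum.distrib[symmetric] field_simps)
lemma mm_diff_r: "((A::real^'n^'m) - B) ** C = A ** C - B ** C"
  by (vector matrix_matrix_mult_def sum_subtractf[symmetric] field_simps)
lemma mm_diff_l: "(A::real^'n^'m) ** (B - C) = A ** B - A ** C"
  by (vector matrix_matrix_mult_def sum_subtractf[symmetric] field_simps)
lemma mm_add_l: "(A::real^'n^'m) ** (B + C) = A ** B + A ** C"
  by (rule matrix_add_ldistrib)
lemma mm_scale_l: "(c *\<^sub>R (A::real^'n^'m)) ** B = c *\<^sub>R (A ** B)"
  by (simp add: scalar_matrix_assoc)
lemma mm_scale_r: "(A::real^'n^'m) ** (c *\<^sub>R B) = c *\<^sub>R (A ** B)"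
  by (simp add: matrix_scalar_ac scalar_matrix_assoc)
lemma tr_add: "transpose ((A::real^'n^'m) + B) = transpose A + transpose B"
  by (vector transpose_def)
lemma tr_diff: "transpose ((A::real^'n^'m) - B) = transpose A - transpose B"
  by (vector transpose_def)
lemma tr_scale: "transpose (c *\<^sub>R (A::real^'n^'m)) = c *\<^sub>R transpose A"
  by (rule transpose_scalar)

lemmas mm_simps = mm_add_r mm_diff_r mm_diff_l mm_add_l mm_scale_l mm_scale_r tr_add tr_diff tr_scale
   matrix_transpose_mul

lemma row_mult: "((A::real^'n^'m) ** B) $ i = A $ i v* B"
  by (simp add: vec_eq_iff matrix_matrix_mult_def vector_matrix_mult_def)

lemma normsq_vec: "(norm (x::real^'n))\<^sup>2 = (\<Sum>i\<in>UNIV. (x$i)\<^sup>2)"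
  unfolding power2_norm_eq_inner inner_vec_def inner_real_def by (simp add: power2_eq_square)

lemma normsq_rows: "(norm (A::real^'n^'m))\<^sup>2 = (\<Sum>i\<in>UNIV. (norm (A$i))\<^sup>2)"
  by (simp add: power2_norm_eq_inner inner_vec_def)

lemma inner_transpose: "inner (transpose (A::real^'n^'m)) (transpose B) = inner A B"
  unfolding inner_vec_def transpose_def inner_real_def by (simp, subst sum.swap, simp)

lemma norm_transpose: "norm (transpose (A::real^'n^'m)) = norm A"
  by (simp add: norm_eq_sqrt_inner inner_transpose)

lemma vm_bound: "norm ((x::real^'m) v* (B::real^'n^'m)) \<le> norm x * norm B"
proof -
  have "(x v* B) $ j = inner x (transpose B $ j)" for j
    by (simp add: vector_matrix_mult_def inner_vec_def transpose_def)
  then have "(norm (x v* B))\<^sup>2 = (\<Sum>j\<in>UNIV. (inner x (transpose B $ j))\<^sup>2)"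
    by (simp add: normsq_vec)
  also have "\<dots> \<le> (\<Sum>j\<in>UNIV. (norm x)\<^sup>2 * (norm (transpose B $ j))\<^sup>2)"
  proof (rule sum_mono)
    fix j
    have "\<bar>inner x (transpose B $ j)\<bar> \<le> norm x * norm (transpose B $ j)"
      by (rule Cauchy_Schwarz_ineq2)
    then show "(inner x (transpose B $ j))\<^sup>2 \<le> (norm x)\<^sup>2 * (norm (transpose B $ j))\<^sup>2"
      by (metis abs_ge_zero power2_abs power_mono power_mult_distrib)
  qed
  also have "\<dots> = (norm x)\<^sup>2 * (norm B)\<^sup>2"
    by (simp add: sum_distrib_left[symmetric] normsq_rows[symmetric] norm_transpose)
  also have "\<dots> = (norm x * norm B)\<^sup>2" by (simp add: power_mult_distrib)
  finally show ?thesis by (rule power2_le_imp_le) simp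
qed

lemma mv_bound: "norm ((A::real^'n^'m) *v x) \<le> norm A * norm x"
proof -
  have "A *v x = x v* transpose A" by simp
  then show ?thesis using vm_bound[of x "transpose A"] by (simp add: norm_transpose mult.commute)
qed

lemma mm_bound: "norm ((A::real^'n^'m) ** (B::real^'p^'n)) \<le> norm A * norm B"
proof -
  have "(norm (A ** B))\<^sup>2 = (\<Sum>i\<in>UNIV. (norm (A$i v* B))\<^sup>2)"
    by (simp add: normsq_rows row_mult)
  also have "\<dots> \<le> (\<Sum>i\<in>UNIV. (norm (A$i))\<^sup>2 * (norm B)\<^sup>2)"
    by (intro sum_mono) (metis norm_ge_zero power_mono power_mult_distrib vm_bound)
  also have "\<dots> = (norm A * norm B)\<^sup>2"
    by (simp add: sum_distrib_right[symmetric] normsq_rows[symmetric] power_mult_distrib)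
  finally show ?thesis by (rule power2_le_imp_le) simp
qed

lemma row_op:
  assumes "\<And>x. norm (transpose (W::real^'n^'n) *v x) \<le> r * norm x" "0 \<le> r"
  shows "norm ((N::real^'n^'m) ** W) \<le> r * norm N"
proof -
  have "(norm (N ** W))\<^sup>2 = (\<Sum>i\<in>UNIV. (norm (transpose W *v (N$i)))\<^sup>2)"
    by (simp add: normsq_rows row_mult)
  also have "\<dots> \<le> (\<Sum>i\<in>UNIV. r\<^sup>2 * (norm (N$i))\<^sup>2)"
    by (intro sum_mono) (metis assms norm_ge_zero power_mono power_mult_distrib)
  also have "\<dots> = (r * norm N)\<^sup>2"
    by (simp add: sum_distrib_left[symmetric] normsq_rows[symmetric] power_mult_distrib)
  finally show ?thesis by (rule power2_le_imp_le) (simp add: assms)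
qed

lemma col_op:
  assumes "\<And>x. norm ((Z::real^'n^'n) *v x) \<le> r * norm x" "0 \<le> r"
  shows "norm (Z ** (N::real^'m^'n)) \<le> r * norm N"
proof -
  have "norm (Z ** N) = norm (transpose N ** transpose Z)"
    by (simp add: norm_transpose flip: matrix_transpose_mul)
  also have "\<dots> \<le> r * norm (transpose N)"
    by (rule row_op) (simp_all add: assms)
  finally show ?thesis by (simp add: norm_transpose)
qed

lemma vm_quad: "inner x (x v* T) = inner (x::real^'n) (T *v x)"
  by (metis dot_lmul_matrix inner_commute)

lemma inner_row_form: "inner (D::real^'n^'m) (D ** T) = (\<Sum>i\<in>UNIV. inner (D$i) (T *v (D$i)))"
  unfolding inner_vec_def[of D] row_mult vm_quad ..

lemma inner_col_form: "inner (D::real^'n^'m) (S ** D) = (\<Sum>i\<in>UNIV. inner (transpose D $ i) (S *v (transpose D $ i)))"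
proof -
  have "inner D (S ** D) = inner (transpose D) (transpose D ** transpose S)"
    by (simp add: inner_transpose flip: matrix_transpose_mul)
  also have "\<dots> = (\<Sum>i\<in>UNIV. inner (transpose D $ i) (transpose S *v (transpose D $ i)))"
    by (rule inner_row_form)
  also have "\<dots> = (\<Sum>i\<in>UNIV. inner (transpose D $ i) (S *v (transpose D $ i)))"
    by (simp only: transpose_matrix_vector vm_quad)
  finally show ?thesis .
qed

lemma adj: "inner ((A::real^'n^'m) *v x) y = inner x (transpose A *v y)"
proof -
  have "A *v x = x v* transpose A" by simp
  then show ?thesis by (simp only: dot_lmul_matrix)
qed

lemma sym_adj: "transpose A = A \<Longrightarrow> inner ((A::real^'n^'n) *v x) y = inner x (A *v y)"
  using adj[of A x y] by simp

lemma quad_disc: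
  fixes a b c :: real
  assumes "\<And>t. 0 \<le> a + 2*t*b + t\<^sup>2*c" "0 \<le> c"
  shows "b\<^sup>2 \<le> a * c"
proof (cases "c = 0")
  case True
  have "b = 0"
  proof (rule ccontr)
    assume "b \<noteq> 0"
    have "0 \<le> a + 2*(-(\<bar>a\<bar>+1)/(2*b))*b + (-(\<bar>a\<bar>+1)/(2*b))\<^sup>2*c" by (rule assms)
    moreover have "2*(-(\<bar>a\<bar>+1)/(2*b))*b = -(\<bar>a\<bar>+1)" using \<open>b \<noteq> 0\<close> by (simp add: field_simps)
    ultimately show False using True by (simp del: minus_add_distrib)
  qed
  with True show ?thesis by simp
next
  case False
  with assms have c: "c > 0" by simp
  have "0 \<le> a + 2*(-b/c)*b + (-b/c)\<^sup>2*c" by (rule assms)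
  also have "\<dots> = a - b\<^sup>2/c" using c by (simp add: field_simps power2_eq_square)
  finally have "b\<^sup>2 / c \<le> a" by simp
  then show ?thesis using c by (simp add: field_simps mult.commute)
qed

lemma psd_CS:
  assumes sym: "transpose B = B" and psd: "\<And>x. 0 \<le> inner x ((B::real^'n^'n) *v x)"
  shows "(inner u (B *v v))\<^sup>2 \<le> inner u (B *v u) * inner v (B *v v)"
proof (rule quad_disc)
  fix t :: real
  have "inner (u + t *\<^sub>R v) (B *v (u + t *\<^sub>R v)) =
      inner u (B *v u) + 2*t*inner u (B *v v) + t\<^sup>2 * inner v (B *v v)"
    using sym_adj[OF sym, of v u]
    by (simp add: matrix_vector_right_distrib matrix_vector_mult_scaleR inner_add_left inner_add_right
        power2_eq_square algebra_simps inner_commute)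
  then show "0 \<le> inner u (B *v u) + 2*t*inner u (B *v v) + t\<^sup>2 * inner v (B *v v)"
    using psd[of "u + t *\<^sub>R v"] by simp
qed (rule psd)

lemma form_op_bound:
  assumes sym: "transpose B = B" and psd: "\<And>x. 0 \<le> inner x ((B::real^'n^'n) *v x)"
    and up: "\<And>x. inner x (B *v x) \<le> \<beta> * (norm x)\<^sup>2" and b: "0 \<le> \<beta>"
  shows "norm (B *v x) \<le> \<beta> * norm x"
proof -
  define y where "y = B *v x"
  have "(norm y)\<^sup>2 = inner x (B *v y)"
    unfolding y_def power2_norm_eq_inner by (rule sym_adj[OF sym])
  then have "((norm y)\<^sup>2)\<^sup>2 \<le> inner x (B *v x) * inner y (B *v y)"
    using psd_CS[OF sym psd, of x y] by simp
  also have "\<dots> \<le> (\<beta> * (norm x)\<^sup>2) * (\<beta> * (norm y)\<^sup>2)"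
    by (intro mult_mono up psd) (use b in simp)
  also have "\<dots> = (\<beta> * norm x * norm y)\<^sup>2" by (simp add: power2_eq_square)
  finally have "(norm y)\<^sup>2 \<le> \<beta> * norm x * norm y"
    by (rule power2_le_imp_le) (use b in simp)
  then have "norm y * norm y \<le> (\<beta> * norm x) * norm y" by (simp add: power2_eq_square mult_ac)
  then have "norm y \<le> \<beta> * norm x"
    by (cases "norm y = 0") (use b in simp, simp)
  then show ?thesis by (simp add: y_def)
qed

lemma mv_add_r: "((A::real^'n^'m) + B) *v x = A *v x + B *v x"
  by (rule matrix_vector_mult_add_rdistrib)
lemma mv_diff_r: "((A::real^'n^'m) - B) *v x = A *v x - B *v x"
  by (rule matrix_vector_mult_diff_rdistrib)
lemma mv_scale_r: "((c *\<^sub>R A)::real^'n^'m) *v x = c *\<^sub>R (A *v x)"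
  by (simp add: scaleR_matrix_vector_assoc)
lemma mv_mm: "((A::real^'n^'m) ** B) *v x = A *v (B *v x)"
  by (simp add: matrix_vector_mul_assoc)

lemma bl_mv: "bounded_linear (\<lambda>Z::real^'n^'m. Z *v x)"
  by (rule bounded_linear_intro[where K="norm x"]) (simp_all add: mv_add_r mv_scale_r mv_bound)

lemma bl_tr: "bounded_linear (\<lambda>Z::real^'n^'m. transpose Z)"
  by (rule bounded_linear_intro[where K=1]) (simp_all add: tr_add tr_scale norm_transpose)

lemma tr_zero: "transpose (0::real^'n^'m) = 0"
  by (simp add: vec_eq_iff transpose_def)

lemma sqrt_exists:
  fixes G :: "real^'n^'n"
  assumes sym: "transpose G = G" and ge: "\<And>x. (norm x)\<^sup>2 \<le> inner x (G *v x)"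
  shows "\<exists>S. pos_def_mat S \<and> S ** S = G"
proof -
  define M where "M = norm G + 1"
  have M1: "M \<ge> 1" by (simp add: M_def)
  define B where "B = mat 1 - (1/M) *\<^sub>R G"
  define \<beta> where "\<beta> = 1 - 1/M"
  define q where "q = sqrt (1/M)"
  define r where "r = 1 - q"
  have q0: "0 < q" and q1: "q \<le> 1" using M1 by (auto simp: q_def)
  have qq: "q\<^sup>2 = 1/M" using M1 by (simp add: q_def)
  have r0: "0 \<le> r" and r1: "r < 1" using q0 q1 by (auto simp: r_def)
  have b0: "0 \<le> \<beta>" using M1 by (simp add: \<beta>_def)
  have br: "\<beta> + r * r = 2 * r" using qq by (simp add: \<beta>_def r_def power2_eq_square algebra_simps)
  have Bsym: "transpose B = B" by (simp add: B_def tr_diff tr_scale sym)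
  have Bq: "inner x (B *v x) = (norm x)\<^sup>2 - inner x (G *v x) / M" for x
    by (simp add: B_def mv_diff_r mv_scale_r inner_diff_right power2_norm_eq_inner)
  have Gup: "inner x (G *v x) \<le> M * (norm x)\<^sup>2" for x
  proof -
    have "inner x (G *v x) \<le> norm x * norm (G *v x)" by (rule Cauchy_Schwarz_ineq2[THEN abs_le_D1])
    also have "\<dots> \<le> norm x * (norm G * norm x)" by (intro mult_left_mono mv_bound) simp
    also have "\<dots> \<le> M * (norm x)\<^sup>2" by (simp add: M_def power2_eq_square algebra_simps)
    finally show ?thesis .
  qed
  have Bpsd: "0 \<le> inner x (B *v x)" for x
    using Gup[of x] M1 by (simp add: Bq field_simps)
  have Bup: "inner x (B *v x) \<le> \<beta> * (norm x)\<^sup>2" for x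
    using ge[of x] M1 by (simp add: Bq \<beta>_def field_simps)
  have Bop: "norm (B *v x) \<le> \<beta> * norm x" for x
    by (rule form_op_bound[OF Bsym Bpsd Bup b0])
  define s where "s = {Z::real^'n^'n. transpose Z = Z \<and> (\<forall>x. norm (Z *v x) \<le> r * norm x)}"
  define f where "f Z = (1/2) *\<^sub>R (B + Z ** Z)" for Z :: "real^'n^'n"
  have "\<exists>!Z\<in>s. f Z = Z"
  proof (rule Banach_fix)
    have "closed s"
      unfolding s_def
    proof (intro closed_Collect_conj closed_Collect_all)
      show "closed {Z::real^'n^'n. transpose Z = Z}"
        by (intro closed_Collect_eq linear_continuous_on bl_tr continuous_on_id)
      fix x :: "real^'n"
      show "closed {Z::real^'n^'n. norm (Z *v x) \<le> r * norm x}"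
        by (intro closed_Collect_le continuous_on_norm linear_continuous_on bl_mv continuous_on_const)
    qed
    then show "Topological_Spaces.complete s" by (simp add: complete_eq_closed)
    have "0 \<in> s" using r0 by (simp add: s_def tr_zero)
    then show "s \<noteq> {}" by blast
    show "0 \<le> r" "r < 1" by (fact r0, fact r1)
    show "f ` s \<subseteq> s"
    proof
      fix Y assume "Y \<in> f ` s"
      then obtain Z where Z: "Z \<in> s" and Y: "Y = f Z" by blast
      have Zs: "transpose Z = Z" and Zb: "\<And>x. norm (Z *v x) \<le> r * norm x" using Z by (auto simp: s_def)
      have "transpose Y = Y" by (simp add: Y f_def tr_add tr_scale Bsym matrix_transpose_mul Zs)
      moreover have "norm (Y *v x) \<le> r * norm x" for x
      proof -
        have "Y *v x = (1/2) *\<^sub>R (B *v x + Z *v (Z *v x))"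
          by (simp add: Y f_def mv_add_r mv_scale_r mv_mm)
        then have "norm (Y *v x) = (1/2) * norm (B *v x + Z *v (Z *v x))" by simp
        also have "\<dots> \<le> (1/2) * (norm (B *v x) + norm (Z *v (Z *v x)))"
          by (simp add: norm_triangle_ineq)
        also have "\<dots> \<le> (1/2) * (\<beta> * norm x + r * (r * norm x))"
          using Bop[of x] Zb[of "Z *v x"] mult_left_mono[OF Zb[of x] r0] by (intro mult_left_mono) auto
        also have "\<dots> = (1/2) * ((\<beta> + r * r) * norm x)" by (simp add: algebra_simps)
        also have "\<dots> = r * norm x" using br by simp
        finally show ?thesis .
      qed
      ultimately show "Y \<in> s" by (simp add: s_def)
    qed
    fix Z W assume Z: "Z \<in> s" and W: "W \<in> s"
    have Zb: "\<And>x. norm (Z *v x) \<le> r * norm x" using Z by (auto simp: s_def)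
    have Ws: "transpose W = W" and Wb: "\<And>x. norm (W *v x) \<le> r * norm x" using W by (auto simp: s_def)
    have "f Z - f W = (1/2) *\<^sub>R (Z ** (Z - W) + (Z - W) ** W)"
      by (simp add: f_def mm_diff_l mm_diff_r algebra_simps)
    then have "dist (f Z) (f W) = (1/2) * norm (Z ** (Z - W) + (Z - W) ** W)"
      by (simp add: dist_norm)
    also have "\<dots> \<le> (1/2) * (norm (Z ** (Z - W)) + norm ((Z - W) ** W))"
      by (simp add: norm_triangle_ineq)
    also have "\<dots> \<le> (1/2) * (r * norm (Z - W) + r * norm (Z - W))"
      using col_op[of Z r "Z - W", OF Zb r0] row_op[of W r "Z - W"] Wb Ws r0 by simp
    also have "\<dots> = r * dist Z W" by (simp add: dist_norm)
    finally show "dist (f Z) (f W) \<le> r * dist Z W" .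
  qed
  then obtain Z where Z: "Z \<in> s" and fZ: "f Z = Z" by blast
  have Zs: "transpose Z = Z" and Zb: "\<And>x. norm (Z *v x) \<le> r * norm x" using Z by (auto simp: s_def)
  have ZZ: "Z ** Z = 2 *\<^sub>R Z - B"
  proof -
    have "2 *\<^sub>R f Z = B + Z ** Z" by (simp add: f_def)
    then show ?thesis using fZ by (simp add: algebra_simps)
  qed
  define S where "S = sqrt M *\<^sub>R (mat 1 - Z)"
  have "S ** S = M *\<^sub>R ((mat 1 - Z) ** (mat 1 - Z))"
    using M1 by (simp add: S_def mm_scale_l mm_scale_r real_sqrt_mult[symmetric])
  also have "(mat 1 - Z) ** (mat 1 - Z) = mat 1 - 2 *\<^sub>R Z + Z ** Z"
    by (simp add: mm_diff_l mm_diff_r algebra_simps scaleR_2)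
  also have "M *\<^sub>R (mat 1 - 2 *\<^sub>R Z + Z ** Z) = G"
    using M1 by (simp add: ZZ B_def algebra_simps)
  finally have SS: "S ** S = G" .
  have "pos_def_mat S"
    unfolding pos_def_mat_def sym_mat_def
  proof (intro conjI allI impI)
    show "transpose S = S" by (simp add: S_def tr_scale tr_diff Zs)
    fix x :: "real^'n" assume "x \<noteq> 0"
    have "inner x (Z *v x) \<le> norm x * norm (Z *v x)" by (rule Cauchy_Schwarz_ineq2[THEN abs_le_D1])
    also have "\<dots> \<le> norm x * (r * norm x)" by (intro mult_left_mono Zb) simp
    finally have xz: "inner x (Z *v x) \<le> r * (norm x)\<^sup>2" by (simp add: power2_eq_square mult_ac)
    have "inner x (S *v x) = sqrt M * ((norm x)\<^sup>2 - inner x (Z *v x))"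
      by (simp add: S_def mv_scale_r mv_diff_r inner_diff_right power2_norm_eq_inner)
    moreover have "0 < (norm x)\<^sup>2 - inner x (Z *v x)"
      using xz r1 \<open>x \<noteq> 0\<close>
      by (smt (verit, ccfv_SIG) mult_less_cancel_right2 zero_less_norm_iff zero_less_power)
    moreover have "0 < sqrt M" using M1 by simp
    ultimately show "0 < inner x (S *v x)" by simp
  qed
  with SS show ?thesis by blast
qed

lemma pd_nonneg: "pos_def_mat B \<Longrightarrow> 0 \<le> inner x ((B::real^'n^'n) *v x)"
  unfolding pos_def_mat_def by (cases "x = 0") (auto intro: less_imp_le)

lemma pd_sym: "pos_def_mat B \<Longrightarrow> transpose B = B"
  unfolding pos_def_mat_def sym_mat_def by simp

lemma sqrt_unique:
  fixes B1 B2 :: "real^'n^'n"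
  assumes p1: "pos_def_mat B1" and p2: "pos_def_mat B2" and eq: "B1 ** B1 = B2 ** B2"
  shows "B1 = B2"
proof -
  define D where "D = B1 - B2"
  have "B1 ** D + D ** B2 = B1 ** B1 - B2 ** B2"
    by (simp add: D_def mm_diff_l mm_diff_r)
  then have z: "B1 ** D + D ** B2 = 0" using eq by simp
  have n1: "0 \<le> inner D (B1 ** D)"
    unfolding inner_col_form by (intro sum_nonneg pd_nonneg[OF p1])
  have n2: "0 \<le> inner D (D ** B2)"
    unfolding inner_row_form by (intro sum_nonneg pd_nonneg[OF p2])
  have "inner D (B1 ** D) + inner D (D ** B2) = 0"
    using z by (simp flip: inner_add_right)
  then have "inner D (D ** B2) = 0" using n1 n2 by linarith
  then have "\<forall>i\<in>UNIV. inner (D$i) (B2 *v (D$i)) = 0"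
    unfolding inner_row_form by (subst (asm) sum_nonneg_eq_0_iff) (auto intro: pd_nonneg[OF p2])
  then have "\<forall>i. D$i = 0"
    using p2 unfolding pos_def_mat_def by (metis UNIV_I less_irrefl)
  then have "D = 0" by (simp add: vec_eq_iff)
  then show ?thesis by (simp add: D_def)
qed

lemma mat_sqrt_props:
  fixes G :: "real^'n^'n"
  assumes sym: "transpose G = G" and ge: "\<And>x. (norm x)\<^sup>2 \<le> inner x (G *v x)"
  shows "pos_def_mat (mat_sqrt G) \<and> mat_sqrt G ** mat_sqrt G = G"
proof -
  obtain S where S: "pos_def_mat S \<and> S ** S = G" using sqrt_exists[OF sym ge] by blast
  have "\<exists>!B. pos_def_mat B \<and> B ** B = G"
    using S sqrt_unique by (intro ex1I[of _ S]) auto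
  then show ?thesis unfolding mat_sqrt_def by (rule theI')
qed

lemma inv_props:
  fixes S :: "real^'n^'n"
  assumes "\<And>x. S *v x = 0 \<Longrightarrow> x = 0"
  shows "S ** matrix_inv S = mat 1 \<and> matrix_inv S ** S = mat 1"
proof -
  have "invertible S" using assms by (simp add: invertible_left_inverse matrix_left_invertible_ker)
  then show ?thesis unfolding invertible_def matrix_inv_def by (rule someI_ex)
qed

lemma vec_times2: "(A::real^'n^'m) * 2 = 2 *\<^sub>R A"
  by (simp add: vec_eq_iff)

lemma core:
  fixes X Y :: "real^'k^'d" and g :: real
  assumes XX: "transpose X ** X = mat 1" and g0: "0 \<le> g"
    and psd: "\<And>x. 0 \<le> inner (X *v x) (Y *v x)"
  defines "A \<equiv> (1/2) *\<^sub>R (transpose X ** Y + transpose Y ** X)"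
  shows "transpose (retr X (g *\<^sub>R Y)) ** retr X (g *\<^sub>R Y) = mat 1 \<and>
    norm (retr X (g *\<^sub>R Y) - (X + g *\<^sub>R Y - g *\<^sub>R (X ** A))) \<le> g\<^sup>2 *
      ((norm X + g * norm Y) * ((norm X * norm Y)\<^sup>2 + ((norm Y)\<^sup>2 + (norm X * norm Y)\<^sup>2)
        * (norm (mat 1 :: real^'k^'k) + g * (norm X * norm Y))) + norm Y * (norm X * norm Y))"
proof -
  define W where "W = X + g *\<^sub>R Y"
  define G where "G = transpose W ** W"
  have Gexp: "G = mat 1 + (2*g) *\<^sub>R A + g\<^sup>2 *\<^sub>R (transpose Y ** Y)"
    unfolding G_def W_def A_def by (simp add: mm_simps XX algebra_simps power2_eq_square)
  have Gsym: "transpose G = G" by (simp add: G_def matrix_transpose_mul)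
  have Xn: "norm (X *v x) = norm x" for x
  proof -
    have "(norm (X *v x))\<^sup>2 = inner x (transpose X *v (X *v x))"
      by (simp add: power2_norm_eq_inner adj)
    also have "\<dots> = (norm x)\<^sup>2" by (simp add: mv_mm[symmetric] XX power2_norm_eq_inner)
    finally show ?thesis by simp
  qed
  have Gq: "inner x (G *v x) = (norm (W *v x))\<^sup>2" for x
    by (simp add: G_def mv_mm power2_norm_eq_inner adj)
  have Gge: "(norm x)\<^sup>2 \<le> inner x (G *v x)" for x
  proof -
    have "(norm (W *v x))\<^sup>2 = (norm (X *v x))\<^sup>2 + 2 * g * inner (X *v x) (Y *v x) + g\<^sup>2 * (norm (Y *v x))\<^sup>2"
      unfolding power2_norm_eq_inner W_def mv_add_r mv_scale_r
      by (simp add: inner_add_left inner_add_right inner_commute algebra_simps power2_eq_square)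
    moreover have "0 \<le> 2 * g * inner (X *v x) (Y *v x)" using g0 psd[of x] by simp
    ultimately show ?thesis using Gq[of x] Xn[of x] by simp
  qed
  define S where "S = mat_sqrt G"
  have Spd: "pos_def_mat S" and SS: "S ** S = G"
    using mat_sqrt_props[OF Gsym Gge] by (auto simp: S_def)
  have Ssym: "transpose S = S" by (rule pd_sym[OF Spd])
  have Sge: "norm y \<le> norm (S *v y)" for y
  proof -
    have "(norm (S *v y))\<^sup>2 = inner y (G *v y)"
      by (simp add: power2_norm_eq_inner sym_adj[OF Ssym] SS[symmetric] mv_mm)
    then show ?thesis using Gge[of y] by (simp add: power2_le_imp_le)
  qed
  have "\<And>y. S *v y = 0 \<Longrightarrow> y = 0" using Sge by (metis norm_eq_zero norm_le_zero_iff)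
  define R where "R = matrix_inv S"
  have SR: "S ** R = mat 1" and RS: "R ** S = mat 1"
    using inv_props[of S] \<open>\<And>y. S *v y = 0 \<Longrightarrow> y = 0\<close> by (auto simp: R_def)
  have Rb: "norm (R *v x) \<le> 1 * norm x" for x
    using Sge[of "R *v x"] by (simp add: mv_mm[symmetric] SR)
  have Rsym: "transpose R = R"
  proof -
    have tRS: "transpose R ** S = mat 1"
      using SR by (metis Ssym matrix_transpose_mul transpose_mat)
    have "transpose R = transpose R ** (S ** R)" by (simp add: SR)
    also have "\<dots> = (transpose R ** S) ** R" by (simp add: matrix_mul_assoc)
    also have "\<dots> = R" using tRS by simp
    finally show ?thesis .
  qed
  have retr_eq: "retr X (g *\<^sub>R Y) = W ** R"
    unfolding retr_def mat_inv_sqrt_def R_def S_def G_def W_def ..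
  have orth: "transpose (W ** R) ** (W ** R) = mat 1"
  proof -
    have "transpose (W ** R) ** (W ** R) = R ** G ** R"
      by (simp add: matrix_transpose_mul Rsym G_def matrix_mul_assoc)
    also have "\<dots> = (R ** S) ** (S ** R)" by (simp add: SS[symmetric] matrix_mul_assoc)
    finally show ?thesis by (simp add: RS SR)
  qed
  have Asym: "transpose A = A" by (simp add: A_def mm_simps algebra_simps)
  have Aq: "inner x (A *v x) = inner (X *v x) (Y *v x)" for x
  proof -
    have a1: "inner x ((transpose X ** Y) *v x) = inner (X *v x) (Y *v x)"
      by (simp only: mv_mm adj[symmetric])
    have a2: "inner x ((transpose Y ** X) *v x) = inner (X *v x) (Y *v x)"
      by (simp only: mv_mm adj[symmetric] inner_commute)
    show ?thesis
      unfolding A_def mv_scale_r mv_add_r inner_scaleR_right inner_add_right a1 a2 by simp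
  qed
  define T' where "T' = mat 1 + g *\<^sub>R A"
  define T where "T = mat 1 - g *\<^sub>R A"
  define E where "E = transpose Y ** Y - A ** A"
  define D where "D = S - T'"
  have eqD: "S ** D + D ** T' = g\<^sup>2 *\<^sub>R E"
  proof -
    have "S ** D + D ** T' = S ** S - T' ** T'" by (simp add: D_def mm_diff_l mm_diff_r)
    also have "\<dots> = g\<^sup>2 *\<^sub>R E"
      by (simp add: SS Gexp T'_def E_def mm_simps algebra_simps power2_eq_square vec_times2)
    finally show ?thesis .
  qed
  have nD: "norm D \<le> g\<^sup>2 * norm E"
  proof -
    have i1: "0 \<le> inner D (S ** D)"
      unfolding inner_col_form by (intro sum_nonneg pd_nonneg[OF Spd])
    have "inner D (D ** T') = (\<Sum>i\<in>UNIV. inner (D$i) (T' *v (D$i)))" by (rule inner_row_form)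
    also have "\<dots> \<ge> (\<Sum>i\<in>UNIV. inner (D$i) (D$i))"
    proof (intro sum_mono)
      fix i
      have "inner (D$i) (T' *v (D$i)) = inner (D$i) (D$i) + g * inner (D$i) (A *v (D$i))"
        by (simp add: T'_def mv_add_r mv_scale_r inner_add_right)
      moreover have "0 \<le> g * inner (D$i) (A *v (D$i))" using g0 psd Aq by simp
      ultimately show "inner (D$i) (D$i) \<le> inner (D$i) (T' *v (D$i))" by simp
    qed
    finally have i2: "inner D D \<le> inner D (D ** T')" by (simp add: inner_vec_def)
    have "inner D D \<le> inner D (S ** D + D ** T')" using i1 i2 by (simp add: inner_add_right)
    also have "\<dots> = g\<^sup>2 * inner D E" by (simp add: eqD)
    also have "\<dots> \<le> g\<^sup>2 * (norm D * norm E)"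
      by (intro mult_left_mono) (simp_all add: Cauchy_Schwarz_ineq2[THEN abs_le_D1])
    finally have "norm D * norm D \<le> (g\<^sup>2 * norm E) * norm D"
      by (simp add: power2_norm_eq_inner[symmetric] power2_eq_square mult_ac)
    then show ?thesis by (cases "norm D = 0") (simp_all add: mult_le_cancel_right)
  qed
  define F where "F = R - T"
  have Feq: "F = R ** (g\<^sup>2 *\<^sub>R (A ** A) - D ** T)"
  proof -
    have ST: "S ** T = mat 1 - g\<^sup>2 *\<^sub>R (A ** A) + D ** T"
    proof -
      have "S = T' + D" by (simp add: D_def)
      then have "S ** T = T' ** T + D ** T" by (simp add: mm_add_r)
      also have "T' ** T = mat 1 - g\<^sup>2 *\<^sub>R (A ** A)"
        by (simp add: T'_def T_def mm_simps algebra_simps power2_eq_square)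
      finally show ?thesis .
    qed
    have "R ** (mat 1 - S ** T) = R - T"
      by (simp add: mm_diff_l matrix_mul_assoc RS)
    moreover have "mat 1 - S ** T = g\<^sup>2 *\<^sub>R (A ** A) - D ** T" by (simp add: ST)
    ultimately show ?thesis by (simp add: F_def)
  qed
  have nA: "norm A \<le> norm X * norm Y"
  proof -
    have "norm A \<le> (1/2) * (norm (transpose X ** Y) + norm (transpose Y ** X))"
      by (simp add: A_def norm_triangle_ineq)
    also have "\<dots> \<le> (1/2) * (norm X * norm Y + norm Y * norm X)"
      using mm_bound[of "transpose X" Y] mm_bound[of "transpose Y" X]
      by (simp add: norm_transpose mult.commute)
    finally show ?thesis by (simp add: mult.commute)
  qed
  have nE: "norm E \<le> (norm Y)\<^sup>2 + (norm X * norm Y)\<^sup>2"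
  proof -
    have "norm E \<le> norm (transpose Y ** Y) + norm (A ** A)" by (simp add: E_def norm_triangle_ineq4)
    also have "\<dots> \<le> (norm Y)\<^sup>2 + (norm A)\<^sup>2"
      using mm_bound[of "transpose Y" Y] mm_bound[of A A]
      by (simp add: norm_transpose power2_eq_square add_mono)
    also have "\<dots> \<le> (norm Y)\<^sup>2 + (norm X * norm Y)\<^sup>2"
      using nA by (simp add: power_mono)
    finally show ?thesis .
  qed
  have nT: "norm T \<le> norm (mat 1 :: real^'k^'k) + g * (norm X * norm Y)"
  proof -
    have "norm T \<le> norm (mat 1 :: real^'k^'k) + g * norm A"
      using norm_triangle_ineq4[of "mat 1 :: real^'k^'k" "g *\<^sub>R A"] g0 by (simp add: T_def)
    also have "\<dots> \<le> norm (mat 1 :: real^'k^'k) + g * (norm X * norm Y)"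
      using nA g0 by (simp add: mult_left_mono)
    finally show ?thesis .
  qed
  have nW: "norm W \<le> norm X + g * norm Y"
    using norm_triangle_ineq[of X "g *\<^sub>R Y"] g0 by (simp add: W_def)
  have nF: "norm F \<le> g\<^sup>2 * ((norm X * norm Y)\<^sup>2 + ((norm Y)\<^sup>2 + (norm X * norm Y)\<^sup>2)
        * (norm (mat 1 :: real^'k^'k) + g * (norm X * norm Y)))"
  proof -
    have "norm F \<le> 1 * norm (g\<^sup>2 *\<^sub>R (A ** A) - D ** T)"
      unfolding Feq by (rule col_op[OF Rb]) simp
    also have "\<dots> \<le> g\<^sup>2 * (norm A * norm A) + norm D * norm T"
      using norm_triangle_ineq4[of "g\<^sup>2 *\<^sub>R (A ** A)" "D ** T"] mm_bound[of D T]
        mult_left_mono[OF mm_bound[of A A] zero_le_power2[of g]]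
      by simp
    also have "\<dots> \<le> g\<^sup>2 * (norm X * norm Y)\<^sup>2 + (g\<^sup>2 * ((norm Y)\<^sup>2 + (norm X * norm Y)\<^sup>2))
          * (norm (mat 1 :: real^'k^'k) + g * (norm X * norm Y))"
    proof (intro add_mono mult_left_mono mult_mono)
      show "norm A * norm A \<le> (norm X * norm Y)\<^sup>2"
        using mult_mono[OF nA nA] by (simp add: power2_eq_square)
      show "norm D \<le> g\<^sup>2 * ((norm Y)\<^sup>2 + (norm X * norm Y)\<^sup>2)"
        using nD mult_left_mono[OF nE zero_le_power2[of g]] by linarith
    qed (use nT in auto)
    finally show ?thesis by (simp add: algebra_simps)
  qed
  have err: "W ** R - (X + g *\<^sub>R Y - g *\<^sub>R (X ** A)) = W ** F - g\<^sup>2 *\<^sub>R (Y ** A)"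
  proof -
    have "R = T + F" by (simp add: F_def)
    then have "W ** R = W ** T + W ** F" by (simp add: mm_add_l)
    also have "W ** T = X + g *\<^sub>R Y - g *\<^sub>R (X ** A) - g\<^sup>2 *\<^sub>R (Y ** A)"
      by (simp add: W_def T_def mm_simps algebra_simps power2_eq_square)
    finally show ?thesis by (simp add: algebra_simps)
  qed
  have "norm (W ** F - g\<^sup>2 *\<^sub>R (Y ** A)) \<le> norm W * norm F + g\<^sup>2 * (norm Y * norm A)"
    using norm_triangle_ineq4[of "W ** F" "g\<^sup>2 *\<^sub>R (Y ** A)"] mm_bound[of W F]
      mult_left_mono[OF mm_bound[of Y A] zero_le_power2[of g]]
    by simp
  also have "\<dots> \<le> (norm X + g * norm Y) * (g\<^sup>2 * ((norm X * norm Y)\<^sup>2 + ((norm Y)\<^sup>2 + (norm X * norm Y)\<^sup>2)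
        * (norm (mat 1 :: real^'k^'k) + g * (norm X * norm Y)))) + g\<^sup>2 * (norm Y * (norm X * norm Y))"
    by (intro add_mono mult_mono nW nF mult_left_mono nA) (simp_all add: g0)
  also have "\<dots> = g\<^sup>2 *
      ((norm X + g * norm Y) * ((norm X * norm Y)\<^sup>2 + ((norm Y)\<^sup>2 + (norm X * norm Y)\<^sup>2)
        * (norm (mat 1 :: real^'k^'k) + g * (norm X * norm Y))) + norm Y * (norm X * norm Y))"
    by (simp add: algebra_simps)
  finally show ?thesis using err orth retr_eq by simp
qed

definition Kf :: "real \<Rightarrow> real \<Rightarrow> real \<Rightarrow> real \<Rightarrow> real" where
  "Kf a y g i = (a + g * y) * ((a * y)\<^sup>2 + (y\<^sup>2 + (a * y)\<^sup>2) * (i + g * (a * y))) + y * (a * y)"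

lemma Kf_mono:
  assumes "0 \<le> a" "0 \<le> y" "y \<le> y'" "0 \<le> g" "g \<le> g'" "0 \<le> i"
  shows "Kf a y g i \<le> Kf a y' g' i"
proof -
  have y': "0 \<le> y'" using assms by linarith
  have g': "0 \<le> g'" using assms by linarith
  have ay: "a * y \<le> a * y'" using assms by (simp add: mult_left_mono)
  have ay0: "0 \<le> a * y" using assms by simp
  have h1: "a + g * y \<le> a + g' * y'" using assms by (simp add: mult_mono)
  have h2: "(a * y)\<^sup>2 \<le> (a * y')\<^sup>2" using ay ay0 by (simp add: power_mono)
  have h3: "y\<^sup>2 \<le> y'\<^sup>2" using assms by (simp add: power_mono)
  have h4: "g * (a * y) \<le> g' * (a * y')" using assms ay ay0 by (simp add: mult_mono)
  have h5: "(y\<^sup>2 + (a * y)\<^sup>2) * (i + g * (a * y)) \<le> (y'\<^sup>2 + (a * y')\<^sup>2) * (i + g' * (a * y'))"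
    using h2 h3 h4 assms ay0 by (intro mult_mono add_mono) auto
  have h6: "(a * y)\<^sup>2 + (y\<^sup>2 + (a * y)\<^sup>2) * (i + g * (a * y)) \<le> (a * y')\<^sup>2 + (y'\<^sup>2 + (a * y')\<^sup>2) * (i + g' * (a * y'))"
    using h2 h5 by simp
  have h7: "(a + g * y) * ((a * y)\<^sup>2 + (y\<^sup>2 + (a * y)\<^sup>2) * (i + g * (a * y))) \<le>
     (a + g' * y') * ((a * y')\<^sup>2 + (y'\<^sup>2 + (a * y')\<^sup>2) * (i + g' * (a * y')))"
    using h1 h6 assms ay0 by (intro mult_mono) auto
  have h8: "y * (a * y) \<le> y' * (a * y')" using assms ay ay0 by (intro mult_mono) auto
  show ?thesis unfolding Kf_def using h7 h8 by simp
qed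

lemma Kf_nonneg: "0 \<le> a \<Longrightarrow> 0 \<le> y \<Longrightarrow> 0 \<le> g \<Longrightarrow> 0 \<le> i \<Longrightarrow> 0 \<le> Kf a y g i"
  unfolding Kf_def by simp

lemma frob_norm_eq: "frob_norm (A::real^'n^'m) = norm A"
proof -
  have "(norm A)\<^sup>2 = (\<Sum>i\<in>UNIV. \<Sum>j\<in>UNIV. (A $ i $ j)\<^sup>2)"
    by (simp add: normsq_rows normsq_vec)
  then show ?thesis unfolding frob_norm_def by (metis norm_ge_zero real_sqrt_unique)
qed

lemma spec_bound: "spec_norm (H::real^'n^'m) \<le> 1 \<Longrightarrow> norm (H *v x) \<le> 1 * norm x"
  unfolding spec_norm_def
  using onorm[OF matrix_vector_mul_bounded_linear[of H], of x]
  by (meson mult_right_mono norm_ge_zero order_trans)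

lemma orth_norm:
  assumes "transpose (X::real^'k^'d) ** X = mat 1"
  shows "norm X = sqrt (real CARD('k))"
proof -
  have d: "(\<Sum>i\<in>UNIV. (X $ i $ j)\<^sup>2) = 1" for j
  proof -
    have "(transpose X ** X) $ j $ j = (\<Sum>i\<in>UNIV. (X $ i $ j)\<^sup>2)"
      by (simp add: matrix_matrix_mult_def transpose_def power2_eq_square)
    then show ?thesis using assms by (simp add: mat_def)
  qed
  have "(norm X)\<^sup>2 = (\<Sum>i\<in>UNIV. \<Sum>j\<in>UNIV. (X $ i $ j)\<^sup>2)"
    by (simp add: normsq_rows normsq_vec)
  also have "\<dots> = (\<Sum>j\<in>UNIV. \<Sum>i\<in>UNIV. (X $ i $ j)\<^sup>2)" by (rule sum.swap)
  also have "\<dots> = real CARD('k)" by (simp add: d)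
  finally show ?thesis by (metis norm_ge_zero real_sqrt_unique)
qed

definition bYc :: "'d::finite itself \<Rightarrow> 'k::finite itself \<Rightarrow> real" where
  "bYc _ _ = (norm (mat 1 :: real^'d^'d) + real CARD('k)) * sqrt (real CARD('k))"

lemma step_riem:
  fixes X :: "real^'k^'d" and H :: "real^'d^'d"
  assumes XX: "transpose X ** X = mat 1" and g0: "0 \<le> g" and gC: "g \<le> C"
    and Hb: "\<And>x. norm (H *v x) \<le> 1 * norm x"
  defines "Xn \<equiv> retr X (g *\<^sub>R ((mat 1 - X ** transpose X) ** H ** X))"
  shows "transpose Xn ** Xn = mat 1 \<and>
    norm (Xn - X - g *\<^sub>R ((mat 1 - X ** transpose X) ** H ** X))
      \<le> g\<^sup>2 * Kf (sqrt (real CARD('k))) (bYc TYPE('d) TYPE('k)) C (norm (mat 1 :: real^'k^'k))"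
proof -
  define P where "P = mat 1 - X ** transpose X"
  define Y where "Y = P ** H ** X"
  have XP: "transpose X ** P = 0"
    by (simp add: P_def mm_diff_l matrix_mul_assoc XX)
  have XY: "transpose X ** Y = 0"
    by (simp add: Y_def matrix_mul_assoc XP)
  have YX: "transpose Y ** X = 0"
    using arg_cong[OF XY, of transpose] by (simp add: matrix_transpose_mul tr_zero)
  have psd: "0 \<le> inner (X *v x) (Y *v x)" for x
    unfolding adj mv_mm[symmetric] XY by simp
  have A0: "(1/2) *\<^sub>R (transpose X ** Y + transpose Y ** X) = 0" by (simp add: XY YX)
  note c = core[OF XX g0 psd, unfolded A0]
  have nX: "norm X = sqrt (real CARD('k))" by (rule orth_norm[OF XX])
  have nHX: "norm (H ** X) \<le> norm X" using col_op[OF Hb, of X] by simp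
  have nP: "norm P \<le> norm (mat 1 :: real^'d^'d) + real CARD('k)"
  proof -
    have "norm P \<le> norm (mat 1 :: real^'d^'d) + norm (X ** transpose X)"
      unfolding P_def by (rule norm_triangle_ineq4)
    also have "norm (X ** transpose X) \<le> norm X * norm X"
      using mm_bound[of X "transpose X"] by (simp add: norm_transpose)
    also have "norm X * norm X = real CARD('k)" by (simp add: nX)
    finally show ?thesis by simp
  qed
  have nY: "norm Y \<le> bYc TYPE('d) TYPE('k)"
  proof -
    have "norm Y = norm (P ** (H ** X))" by (simp add: Y_def matrix_mul_assoc)
    also have "\<dots> \<le> norm P * norm (H ** X)" by (rule mm_bound)
    also have "\<dots> \<le> (norm (mat 1 :: real^'d^'d) + real CARD('k)) * sqrt (real CARD('k))"
      using nHX nX nP by (intro mult_mono) auto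
    finally show ?thesis by (simp add: bYc_def)
  qed
  have "Kf (norm X) (norm Y) g (norm (mat 1 :: real^'k^'k)) \<le>
        Kf (sqrt (real CARD('k))) (bYc TYPE('d) TYPE('k)) C (norm (mat 1 :: real^'k^'k))"
    unfolding nX by (rule Kf_mono) (use nY g0 gC in auto)
  then have "g\<^sup>2 * Kf (norm X) (norm Y) g (norm (mat 1 :: real^'k^'k)) \<le>
        g\<^sup>2 * Kf (sqrt (real CARD('k))) (bYc TYPE('d) TYPE('k)) C (norm (mat 1 :: real^'k^'k))"
    by (simp add: mult_left_mono)
  with c show ?thesis
    by (simp add: Xn_def Y_def P_def Kf_def algebra_simps)
qed

lemma step_pow:
  fixes X :: "real^'k^'d" and H :: "real^'d^'d"
  assumes XX: "transpose X ** X = mat 1" and g0: "0 \<le> g" and gC: "g \<le> C"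
    and Hb: "\<And>x. norm (H *v x) \<le> 1 * norm x" and Hpd: "pos_def_mat H"
  defines "Xn \<equiv> retr X (g *\<^sub>R (H ** X))"
  shows "transpose Xn ** Xn = mat 1 \<and>
    norm (Xn - X - g *\<^sub>R ((mat 1 - X ** transpose X) ** H ** X))
      \<le> g\<^sup>2 * Kf (sqrt (real CARD('k))) (bYc TYPE('d) TYPE('k)) C (norm (mat 1 :: real^'k^'k))"
proof -
  define Y where "Y = H ** X"
  have Hs: "transpose H = H" by (rule pd_sym[OF Hpd])
  have psd: "0 \<le> inner (X *v x) (Y *v x)" for x
    using pd_nonneg[OF Hpd, of "X *v x"] by (simp add: Y_def mv_mm)
  have A: "(1/2) *\<^sub>R (transpose X ** Y + transpose Y ** X) = transpose X ** H ** X"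
    by (simp add: Y_def matrix_transpose_mul Hs matrix_mul_assoc scaleR_2[symmetric])
  note c = core[OF XX g0 psd, unfolded A]
  have eq: "X + g *\<^sub>R Y - g *\<^sub>R (X ** (transpose X ** H ** X)) = X + g *\<^sub>R ((mat 1 - X ** transpose X) ** H ** X)"
    by (simp add: Y_def mm_diff_r matrix_mul_assoc algebra_simps)
  have nX: "norm X = sqrt (real CARD('k))" by (rule orth_norm[OF XX])
  have nY: "norm Y \<le> bYc TYPE('d) TYPE('k)"
  proof -
    have "norm Y \<le> 1 * norm X" unfolding Y_def by (rule col_op[OF Hb]) simp
    also have "\<dots> \<le> (norm (mat 1 :: real^'d^'d) + real CARD('k)) * sqrt (real CARD('k))"
    proof -
      have "0 < CARD('k)" by simp
      then have h: "1 \<le> norm (mat 1 :: real^'d^'d) + real CARD('k)"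
        by (smt (verit) norm_ge_zero of_nat_0_less_iff of_nat_less_imp_less One_nat_def less_Suc0 not_less_eq of_nat_1 of_nat_le_iff)
      show ?thesis using mult_right_mono[OF h, of "sqrt (real CARD('k))"] nX by simp
    qed
    finally show ?thesis by (simp add: bYc_def)
  qed
  have "Kf (norm X) (norm Y) g (norm (mat 1 :: real^'k^'k)) \<le>
        Kf (sqrt (real CARD('k))) (bYc TYPE('d) TYPE('k)) C (norm (mat 1 :: real^'k^'k))"
    unfolding nX by (rule Kf_mono) (use nY g0 gC in auto)
  then have kb: "g\<^sup>2 * Kf (norm X) (norm Y) g (norm (mat 1 :: real^'k^'k)) \<le>
        g\<^sup>2 * Kf (sqrt (real CARD('k))) (bYc TYPE('d) TYPE('k)) C (norm (mat 1 :: real^'k^'k))"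
    by (simp add: mult_left_mono)
  have eqn: "Xn - X - g *\<^sub>R ((mat 1 - X ** transpose X) ** H ** X) =
      retr X (g *\<^sub>R Y) - (X + g *\<^sub>R Y - g *\<^sub>R (X ** (transpose X ** H ** X)))"
    unfolding eq by (simp add: Xn_def Y_def)
  have c2: "norm (retr X (g *\<^sub>R Y) - (X + g *\<^sub>R Y - g *\<^sub>R (X ** (transpose X ** H ** X))))
      \<le> g\<^sup>2 * Kf (norm X) (norm Y) g (norm (mat 1 :: real^'k^'k))"
    using c by (simp only: Kf_def)
  have "transpose Xn ** Xn = mat 1" using c by (simp add: Xn_def Y_def)
  then show ?thesis unfolding eqn using order_trans[OF c2 kb] by blast
qed

theorem lemma10:
  fixes M :: "'w measure"
    and H :: "nat \<Rightarrow> 'w \<Rightarrow> real^'d^'d"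
    and X :: "nat \<Rightarrow> 'w \<Rightarrow> real^'k^'d"
    and X0 :: "real^'k^'d"
    and \<gamma> :: "nat \<Rightarrow> real"
    and C \<alpha> :: real
  assumes "prob_space M"
    and "AE \<omega> in M. \<forall>n\<ge>1. pos_def_mat (H n \<omega>) \<and> spec_norm (H n \<omega>) \<le> 1"
    and "C > 0" and "1/2 < \<alpha>" and "\<alpha> < 1"
    and "\<And>n. n \<ge> 1 \<Longrightarrow> \<gamma> n = C * real n powr (- \<alpha>)"
    and "transpose X0 ** X0 = mat 1"
    and "\<And>\<omega>. X 0 \<omega> = X0"
    and "(\<forall>\<omega> n. n \<ge> 1 \<longrightarrow> X n \<omega> = retr (X (n - 1) \<omega>)
            (\<gamma> n *\<^sub>R ((mat 1 - X (n - 1) \<omega> ** transpose (X (n - 1) \<omega>)) ** H n \<omega> ** X (n - 1) \<omega>)))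
       \<or> (\<forall>\<omega> n. n \<ge> 1 \<longrightarrow> X n \<omega> = retr (X (n - 1) \<omega>) (\<gamma> n *\<^sub>R (H n \<omega> ** X (n - 1) \<omega>)))"
  shows "\<exists>c>0. AE \<omega> in M. \<forall>n\<ge>1.
           frob_norm (X n \<omega> - X (n - 1) \<omega>
             - \<gamma> n *\<^sub>R ((mat 1 - X (n - 1) \<omega> ** transpose (X (n - 1) \<omega>)) ** H n \<omega> ** X (n - 1) \<omega>))
           \<le> c * (\<gamma> n)\<^sup>2"
proof -
  define c0 where "c0 = Kf (sqrt (real CARD('k))) (bYc TYPE('d) TYPE('k)) C (norm (mat 1 :: real^'k^'k))"
  have bY0: "0 \<le> bYc TYPE('d) TYPE('k)" by (simp add: bYc_def)
  have c00: "0 \<le> c0" unfolding c0_def by (rule Kf_nonneg) (use bY0 assms(3) in auto)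
  have gam: "0 \<le> \<gamma> n \<and> \<gamma> n \<le> C" if "n \<ge> 1" for n
  proof -
    have n1: "1 \<le> real n" using that by simp
    have p1: "1 \<le> real n powr \<alpha>" using ge_one_powr_ge_zero[OF n1] assms(4) by simp
    have "real n powr (- \<alpha>) = inverse (real n powr \<alpha>)" by (rule powr_minus)
    then have "0 \<le> real n powr (- \<alpha>) \<and> real n powr (- \<alpha>) \<le> 1"
      using p1 by (simp add: inverse_le_1_iff)
    then show ?thesis using assms(3) assms(6)[OF that]
      by (simp add: mult_le_cancel_left1)
  qed
  have step: "transpose (X n \<omega>) ** X n \<omega> = mat 1 \<and>
      norm (X n \<omega> - X (n - 1) \<omega>
             - \<gamma> n *\<^sub>R ((mat 1 - X (n - 1) \<omega> ** transpose (X (n - 1) \<omega>)) ** H n \<omega> ** X (n - 1) \<omega>))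
      \<le> (\<gamma> n)\<^sup>2 * c0"
    if n1: "n \<ge> 1" and good: "pos_def_mat (H n \<omega>) \<and> spec_norm (H n \<omega>) \<le> 1"
      and orth: "transpose (X (n - 1) \<omega>) ** X (n - 1) \<omega> = mat 1" for n \<omega>
  proof -
    have Hb: "\<And>x. norm (H n \<omega> *v x) \<le> 1 * norm x" using good spec_bound by blast
    have g: "0 \<le> \<gamma> n" "\<gamma> n \<le> C" using gam[OF n1] by auto
    from assms(9) show ?thesis
    proof
      assume R: "\<forall>\<omega> n. n \<ge> 1 \<longrightarrow> X n \<omega> = retr (X (n - 1) \<omega>)
            (\<gamma> n *\<^sub>R ((mat 1 - X (n - 1) \<omega> ** transpose (X (n - 1) \<omega>)) ** H n \<omega> ** X (n - 1) \<omega>))"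
      show ?thesis using step_riem[OF orth g Hb] R n1 by (simp add: c0_def)
    next
      assume R: "\<forall>\<omega> n. n \<ge> 1 \<longrightarrow> X n \<omega> = retr (X (n - 1) \<omega>) (\<gamma> n *\<^sub>R (H n \<omega> ** X (n - 1) \<omega>))"
      show ?thesis using step_pow[OF orth g Hb] good R n1 by (simp add: c0_def)
    qed
  qed
  have "AE \<omega> in M. \<forall>n\<ge>1.
           frob_norm (X n \<omega> - X (n - 1) \<omega>
             - \<gamma> n *\<^sub>R ((mat 1 - X (n - 1) \<omega> ** transpose (X (n - 1) \<omega>)) ** H n \<omega> ** X (n - 1) \<omega>))
           \<le> (c0 + 1) * (\<gamma> n)\<^sup>2"
    using assms(2)
  proof (rule eventually_mono)
    fix \<omega> assume good: "\<forall>n\<ge>1. pos_def_mat (H n \<omega>) \<and> spec_norm (H n \<omega>) \<le> 1"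
    have orth: "transpose (X n \<omega>) ** X n \<omega> = mat 1" for n
    proof (induction n)
      case 0
      then show ?case using assms(7,8) by simp
    next
      case (Suc m)
      then show ?case using step[of "Suc m" \<omega>] good by simp
    qed
    show "\<forall>n\<ge>1.
           frob_norm (X n \<omega> - X (n - 1) \<omega>
             - \<gamma> n *\<^sub>R ((mat 1 - X (n - 1) \<omega> ** transpose (X (n - 1) \<omega>)) ** H n \<omega> ** X (n - 1) \<omega>))
           \<le> (c0 + 1) * (\<gamma> n)\<^sup>2"
    proof (intro allI impI)
      fix n :: nat assume n1: "n \<ge> 1"
      have "(\<gamma> n)\<^sup>2 * c0 \<le> (c0 + 1) * (\<gamma> n)\<^sup>2" by (simp add: algebra_simps)
      then show "frob_norm (X n \<omega> - X (n - 1) \<omega>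
             - \<gamma> n *\<^sub>R ((mat 1 - X (n - 1) \<omega> ** transpose (X (n - 1) \<omega>)) ** H n \<omega> ** X (n - 1) \<omega>))
           \<le> (c0 + 1) * (\<gamma> n)\<^sup>2"
        using step[OF n1 _ orth] good n1 unfolding frob_norm_eq by fastforce
    qed
  qed
  moreover have "c0 + 1 > 0" using c00 by simp
  ultimately show ?thesis by blast
qed

end
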